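(* Assume $r_k\ge4/7$ for all $k\ge2$, $\kappa\ge\|f'\|_{C[-\beta,\beta]}$, $\|\phi^0\|_\infty\le\beta$, and $$\tau_1\le\min\Big\{\Big(\frac{4}{11\varsigma m(\kappa+4\varepsilon^2/h^2)\Gamma(2-\alpha)}\Big)^{1/\alpha},\Big(\frac{4}{11\kappa(1-\varsigma)m\Gamma(2-\alpha)}\Big)^{1/\alpha}\Big\}.$$ If moreover for all $n\ge1$ $$\tau_n\le\Big(\frac{4}{11(1-\varsigma)m(4\varepsilon^2/h^2+\kappa K_2)\Gamma(2-\alpha)}\Big)^{1/\alpha},$$ then the solution of the (balanced) $L2$-$1_\sigma$-sESAV scheme satisfies $\|\phi^n\|_\infty\le\beta$ for all $n\ge1$.
   Context: Setting: $\Omega=(0,L)^2$ with periodic boundary conditions; constants $m>0$, $\varepsilon>0$, $\alpha\in(0,1)$, and $\varsigma:=\alpha/2$. The nonlinearity $f=-F'$ is one of: (double-well) $F(\phi)=\frac14(1-\phi^2)^2$, $f(\phi)=\phi-\phi^3$, with $\beta=1$; or (Flory–Huggins) $F(\phi)=\frac{\theta}{2}[(1+\phi)\ln(1+\phi)+(1-\phi)\ln(1-\phi)]-\frac{\theta_c}{2}\phi^2$, $f(\phi)=\frac{\theta}{2}\ln\frac{1-\phi}{1+\phi}+\theta_c\phi$ on $(-1,1)$, with $\theta_c>\theta>0$ and $\beta\in(0,1)$ the positive root of $f$. In both cases $f(\pm\beta)=0$. Spatial discretization: $M\in\mathbb N$, $h=L/M$; $\mathbb V_h$ is the space of real grid functions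 $v=\{v_{ij}\}_{i,j\in\mathbb Z}$ that are $M$-periodic in each index; $\langle v,w\rangle=h^2\sum_{i,j=1}^Mv_{ij}w_{ij}$, $\|v\|_\infty=\max_{1\le i,j\le M}|v_{ij}|$; $\Delta_hv_{ij}=h^{-2}(v_{i+1,j}+v_{i-1,j}+v_{i,j+1}+v_{i,j-1}-4v_{ij})$. Scalar functions act on grid functions pointwise. $E_{1h}[v]=\langle F(v),1\rangle$ and $g_h(v,w)=\exp(w)/\exp(E_{1h}[v])$ for $v\in\mathbb V_h$ (with $\|v\|_\infty<1$ in the Flory–Huggins case) and $w\in\mathbb R$. Auxiliary functional: $V:\mathbb R\to\mathbb R$ satisfies (A1) $V\in C^1(\mathbb R)\cap W^{2,\infty}(\mathbb R)$, $V(1)=1$, $V'(1)=0$, $|V'|\le K_1$; (A2) $0\le V\le K_2$ for a constant $K_2>0$; (A3) $|z_1-1|\le|z_2-1|$ implies $|V(z_1)-1|\le|V(z_2)-1|$. Time grid: $0=t_0<t_1<\dots<t_N=T$, $\tau_k=t_k-t_{k-1}$, $r_k=\tau_k/\tau_{k-1}$ ($k\ge2$), $\nabla_\tau v^k=v^k-v^{k-1}$, $\mathbb D_\tau v^k=\nabla_\tau v^k/\tau_k$, $\omega_\mu(t)=t^{\mu-1}/\Gamma(\mu)$. Constant $\kappa\ge0$; data $\phi^0\in\mathbb V_h$, $R^0\in\mathbb R$. For $n\ge2$ the predicted solution is $\hat\phi^n=\min\{\max\{(1+r_n)\phi^{n-1}-r_n\phi^{n-2},-\beta\},\beta\}$ (pointwise).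 $L2$-$1_\sigma$ discretization: $t_{k-\varsigma}=(1-\varsigma)t_k+\varsigma t_{k-1}$, $t_{k-1/2}=(t_k+t_{k-1})/2$; $a^{(n)}_{n-k}=\frac1{\tau_k}\int_{t_{k-1}}^{\min\{t_k,t_{n-\varsigma}\}}\omega_{1-\alpha}(t_{n-\varsigma}-s)\,ds$ ($1\le k\le n$), $b^{(n)}_{n-k}=\frac{2}{\tau_k(\tau_k+\tau_{k+1})}\int_{t_{k-1}}^{t_k}(s-t_{k-1/2})\omega_{1-\alpha}(t_{n-\varsigma}-s)\,ds$ ($1\le k\le n-1$); $B^{(1)}_0=a^{(1)}_0$, and for $n\ge2$: $B^{(n)}_0=a^{(n)}_0+b^{(n)}_1/r_n$, $B^{(n)}_{n-k}=a^{(n)}_{n-k}+b^{(n)}_{n-k+1}/r_k-b^{(n)}_{n-k}$ for $2\le k\le n-1$, $B^{(n)}_{n-1}=a^{(n)}_{n-1}-b^{(n)}_{n-1}$; $\tilde{\mathbb D}^\alpha_\tau v^n=\sum_{k=1}^nB^{(n)}_{n-k}\nabla_\tau v^k$; $w^{k-\varsigma}=(1-\varsigma)w^k+\varsigma w^{k-1}$. Balanced $L2$-$1_\sigma$-sESAV scheme: $\hat\phi^1\in\mathbb V_h$ with $\|\hat\phi^1\|_\infty\le\beta$ solves $B^{(1)}_0(\hat\phi^1-\phi^0)=m(\varepsilon^2\Delta_h\hat\phi^{1-\varsigma}+f(\hat\phi^{1-\varsigma}))$; for $n\ge2$, $\hat\phi^n$ is the predicted solution above. For $n\ge1$ set $\hat\phi^{n-\varsigma}=(1-\varsigma)\hat\phi^n+\varsigma\phi^{n-1}$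 and $V^{n-\varsigma}=V(g_h(\hat\phi^{n-\varsigma},R^{n-1}))$, and define $(\phi^n,R^n)$ by $\tilde{\mathbb D}^\alpha_\tau\phi^n=m(\varepsilon^2\Delta_h\phi^{n-\varsigma}+V^{n-\varsigma}f(\hat\phi^{n-\varsigma})-\kappa V^{n-\varsigma}(\phi^{n-\varsigma}-\hat\phi^{n-\varsigma}))$ and $\mathbb D_\tau R^n=V^{n-\varsigma}\langle-f(\hat\phi^{n-\varsigma})+\kappa(\phi^{n-\varsigma}-\hat\phi^{n-\varsigma}),\mathbb D_\tau\phi^n\rangle$. *)

theory Defs
  imports "HOL-Analysis.Analysis"
begin

type_synonym grid = "int \<Rightarrow> int \<Rightarrow> real"

definition gridspace :: "nat \<Rightarrow> grid set" where
  "gridspace M = {v. \<forall>i j. v (i + int M) j = v i j \<and> v i (j + int M) = v i j}"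

definition gip :: "real \<Rightarrow> nat \<Rightarrow> grid \<Rightarrow> grid \<Rightarrow> real" where
  "gip h M v w = h^2 * (\<Sum>i\<in>{1..int M}. \<Sum>j\<in>{1..int M}. v i j * w i j)"

definition gsup :: "nat \<Rightarrow> grid \<Rightarrow> real" where
  "gsup M v = Max ((\<lambda>(i,j). \<bar>v i j\<bar>) ` ({1..int M} \<times> {1..int M}))"

definition glap :: "real \<Rightarrow> grid \<Rightarrow> grid" where
  "glap h v i j = (v (i+1) j + v (i-1) j + v i (j+1) + v i (j-1) - 4 * v i j) / h^2"

definition E1h :: "(real \<Rightarrow> real) \<Rightarrow> real \<Rightarrow> nat \<Rightarrow> grid \<Rightarrow> real" where
  "E1h F h M v = gip h M (\<lambda>i j. F (v i j)) (\<lambda>i j. 1)"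

definition gh :: "(real \<Rightarrow> real) \<Rightarrow> real \<Rightarrow> nat \<Rightarrow> grid \<Rightarrow> real \<Rightarrow> real" where
  "gh F h M v w = exp w / exp (E1h F h M v)"

definition dwF :: "real \<Rightarrow> real" where "dwF x = (1 - x^2)^2 / 4"
definition dwf :: "real \<Rightarrow> real" where "dwf x = x - x^3"
definition fhF :: "real \<Rightarrow> real \<Rightarrow> real \<Rightarrow> real" where
  "fhF \<theta> \<theta>c x = \<theta>/2 * ((1+x) * ln (1+x) + (1-x) * ln (1-x)) - \<theta>c/2 * x^2"
definition fhf :: "real \<Rightarrow> real \<Rightarrow> real \<Rightarrow> real" where
  "fhf \<theta> \<theta>c x = \<theta>/2 * ln ((1-x)/(1+x)) + \<theta>c * x"

definition tau :: "(nat \<Rightarrow> real) \<Rightarrow> nat \<Rightarrow> real" where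
  "tau t k = t k - t (k-1)"
definition rr :: "(nat \<Rightarrow> real) \<Rightarrow> nat \<Rightarrow> real" where
  "rr t k = tau t k / tau t (k-1)"
definition omega :: "real \<Rightarrow> real \<Rightarrow> real" where
  "omega \<mu> x = x powr (\<mu> - 1) / Gamma \<mu>"
(* t_{n-sigma} with sigma = alpha/2 *)
definition tsig :: "(nat \<Rightarrow> real) \<Rightarrow> real \<Rightarrow> nat \<Rightarrow> real" where
  "tsig t \<alpha> n = (1 - \<alpha>/2) * t n + (\<alpha>/2) * t (n-1)"

(* acoef t alpha n k = a^{(n)}_{n-k},  1 <= k <= n *)
definition acoef :: "(nat \<Rightarrow> real) \<Rightarrow> real \<Rightarrow> nat \<Rightarrow> nat \<Rightarrow> real" where
  "acoef t \<alpha> n k = (1 / tau t k) *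
     integral {t (k-1) .. min (t k) (tsig t \<alpha> n)} (\<lambda>s. omega (1-\<alpha>) (tsig t \<alpha> n - s))"

(* bcoef t alpha n k = b^{(n)}_{n-k},  1 <= k <= n-1 *)
definition bcoef :: "(nat \<Rightarrow> real) \<Rightarrow> real \<Rightarrow> nat \<Rightarrow> nat \<Rightarrow> real" where
  "bcoef t \<alpha> n k = 2 / (tau t k * (tau t k + tau t (k+1))) *
     integral {t (k-1) .. t k} (\<lambda>s. (s - (t k + t (k-1)) / 2) * omega (1-\<alpha>) (tsig t \<alpha> n - s))"

(* Bcoef t alpha n k = B^{(n)}_{n-k},  1 <= k <= n *)
definition Bcoef :: "(nat \<Rightarrow> real) \<Rightarrow> real \<Rightarrow> nat \<Rightarrow> nat \<Rightarrow> real" where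
  "Bcoef t \<alpha> n k =
     (if n = 1 then acoef t \<alpha> 1 1
      else if k = n then acoef t \<alpha> n n + bcoef t \<alpha> n (n-1) / rr t n
      else if k = 1 then acoef t \<alpha> n 1 - bcoef t \<alpha> n 1
      else acoef t \<alpha> n k + bcoef t \<alpha> n (k-1) / rr t k - bcoef t \<alpha> n k)"

definition Dcaputo :: "(nat \<Rightarrow> real) \<Rightarrow> real \<Rightarrow> (nat \<Rightarrow> grid) \<Rightarrow> nat \<Rightarrow> grid" where
  "Dcaputo t \<alpha> v n i j = (\<Sum>k=1..n. Bcoef t \<alpha> n k * (v k i j - v (k-1) i j))"

definition clip :: "real \<Rightarrow> real \<Rightarrow> real" where
  "clip \<beta> x = min (max x (-\<beta>)) \<beta>"

end

theory Submission
  imports Defs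
begin

definition wk :: "real \<Rightarrow> real \<Rightarrow> real \<Rightarrow> real" where
  "wk a T s = (T - s) powr (-a) / Gamma (1 - a)"
definition wd :: "real \<Rightarrow> real \<Rightarrow> real \<Rightarrow> real" where
  "wd a T s = a * (T - s) powr (-a-1) / Gamma (1 - a)"
definition wdd :: "real \<Rightarrow> real \<Rightarrow> real \<Rightarrow> real" where
  "wdd a T s = a * (a+1) * (T - s) powr (-a-2) / Gamma (1 - a)"

lemma Gamma1a_pos: "a < 1 \<Longrightarrow> Gamma (1 - a) > (0::real)"
  by (intro Gamma_real_pos) simp

lemma powr_deriv_T: "s < T \<Longrightarrow> ((\<lambda>s. (T - s) powr e) has_real_derivative (- e * (T - s) powr (e - 1))) (at s)"
  apply (rule derivative_eq_intros refl | simp)+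
  done

lemma wk_deriv: "s < T \<Longrightarrow> (wk a T has_real_derivative wd a T s) (at s)"
proof -
  assume "s < T"
  from DERIV_cdivide[OF powr_deriv_T[OF this, of "-a"], of "Gamma (1-a)"]
  show ?thesis unfolding wk_def wd_def by (simp add: algebra_simps)
qed

lemma wd_deriv: "s < T \<Longrightarrow> (wd a T has_real_derivative wdd a T s) (at s)"
proof -
  assume "s < T"
  from DERIV_cdivide[OF DERIV_cmult[OF powr_deriv_T[OF this, of "-a-1"], of a], of "Gamma (1-a)"]
  show ?thesis unfolding wdd_def wd_def by (simp add: algebra_simps)
qed

lemma wk_cont: "a < 1 \<Longrightarrow> d < T \<Longrightarrow> continuous_on {c..d} (wk a T)"
proof -
  assume "a < 1" "d < T"
  then have g: "Gamma (1-a) \<noteq> 0" using Gamma1a_pos[of a] by (metis less_irrefl)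
  show ?thesis unfolding wk_def using g \<open>d < T\<close> by (auto intro!: continuous_intros)
qed
lemma wd_cont: "a < 1 \<Longrightarrow> d < T \<Longrightarrow> continuous_on {c..d} (wd a T)"
proof -
  assume "a < 1" "d < T"
  then have g: "Gamma (1-a) \<noteq> 0" using Gamma1a_pos[of a] by (metis less_irrefl)
  show ?thesis unfolding wd_def using g \<open>d < T\<close> by (auto intro!: continuous_intros)
qed
lemma wdd_cont: "a < 1 \<Longrightarrow> d < T \<Longrightarrow> continuous_on {c..d} (wdd a T)"
proof -
  assume "a < 1" "d < T"
  then have g: "Gamma (1-a) \<noteq> 0" using Gamma1a_pos[of a] by (metis less_irrefl)
  show ?thesis unfolding wdd_def using g \<open>d < T\<close> by (auto intro!: continuous_intros)
qed

lemma wk_nonneg: "a < 1 \<Longrightarrow> 0 \<le> wk a T s"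
  unfolding wk_def using Gamma1a_pos[of a] by simp
lemma wd_nonneg: "0 < a \<Longrightarrow> a < 1 \<Longrightarrow> 0 \<le> wd a T s"
  unfolding wd_def using Gamma1a_pos[of a] by simp
lemma wdd_nonneg: "0 < a \<Longrightarrow> a < 1 \<Longrightarrow> 0 \<le> wdd a T s"
  unfolding wdd_def using Gamma1a_pos[of a] by simp

lemma piece:
  fixes a T c d h1 h2 g0 g1 :: real
  assumes a: "0 < a" "a < 1" and cd: "c \<le> d" "d < T"
    and P2: "\<And>y. 0 \<le> y \<Longrightarrow> y \<le> d - c \<Longrightarrow> 0 \<le> h2 + h1*y + g0*y^2/2 + g1*y^3/6"
  shows "integral {c..d} (\<lambda>s. wk a T s * (g0 + g1*(d-s))) \<ge>
     wk a T c * (h1 + g0*(d-c) + g1*(d-c)^2/2) + wd a T c * (h2 + h1*(d-c) + g0*(d-c)^2/2 + g1*(d-c)^3/6)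
     - wk a T d * h1 - wd a T d * h2"
proof -
  define P1 where "P1 s = h1 + g0*(d-s) + g1*(d-s)^2/2" for s
  define Q where "Q s = h2 + h1*(d-s) + g0*(d-s)^2/2 + g1*(d-s)^3/6" for s
  define F where "F s = - (wk a T s * P1 s) - wd a T s * Q s" for s
  have dP1: "(P1 has_real_derivative (- (g0 + g1*(d-s)))) (at s)" for s
    unfolding P1_def by (rule derivative_eq_intros refl | simp)+ (simp add: algebra_simps power2_eq_square)
  have dQ: "(Q has_real_derivative (- P1 s)) (at s)" for s
    unfolding Q_def P1_def by (rule derivative_eq_intros refl | simp)+ (simp add: algebra_simps power2_eq_square power3_eq_cube)
  have dF: "(F has_real_derivative (wk a T s * (g0 + g1*(d-s)) - wdd a T s * Q s)) (at s)" if "s \<le> d" for s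
  proof -
    have sT: "s < T" using that cd by simp
    have A: "((\<lambda>x. wk a T x * P1 x) has_real_derivative (wd a T s * P1 s + wk a T s * (- (g0 + g1*(d-s))))) (at s)"
      using DERIV_mult[OF wk_deriv[OF sT] dP1] by (simp add: algebra_simps)
    have B: "((\<lambda>x. wd a T x * Q x) has_real_derivative (wdd a T s * Q s + wd a T s * (- P1 s))) (at s)"
      using DERIV_mult[OF wd_deriv[OF sT] dQ] by (simp add: algebra_simps)
    have "(F has_real_derivative (- (wd a T s * P1 s + wk a T s * (- (g0 + g1*(d-s)))) - (wdd a T s * Q s + wd a T s * (- P1 s)))) (at s)"
      unfolding F_def
      by (intro DERIV_diff DERIV_minus A B)
    then show ?thesis by (simp add: algebra_simps)
  qed
  have ftc: "((\<lambda>s. wk a T s * (g0 + g1*(d-s)) - wdd a T s * Q s) has_integral (F d - F c)) {c..d}"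
    apply (rule fundamental_theorem_of_calculus[OF cd(1)])
    using dF by (auto simp: has_real_derivative_iff_has_vector_derivative[symmetric] intro: DERIV_subset)
  have i2: "(\<lambda>s. wdd a T s * Q s) integrable_on {c..d}"
    unfolding Q_def by (intro integrable_continuous_interval continuous_intros wdd_cont cd a) auto
  have nn: "0 \<le> integral {c..d} (\<lambda>s. wdd a T s * Q s)"
  proof (rule integral_nonneg[OF i2])
    fix s assume "s \<in> {c..d}"
    then have "0 \<le> Q s" unfolding Q_def using P2[of "d-s"] by auto
    then show "0 \<le> wdd a T s * Q s" using wdd_nonneg[OF a] by simp
  qed
  have eq: "integral {c..d} (\<lambda>s. wk a T s * (g0 + g1*(d-s))) =
      integral {c..d} (\<lambda>s. wk a T s * (g0 + g1*(d-s)) - wdd a T s * Q s) + integral {c..d} (\<lambda>s. wdd a T s * Q s)"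
    using integral_add[OF has_integral_integrable[OF ftc] i2] by simp
  have "F d - F c = wk a T c * (h1 + g0*(d-c) + g1*(d-c)^2/2) + wd a T c * (h2 + h1*(d-c) + g0*(d-c)^2/2 + g1*(d-c)^3/6)
     - wk a T d * h1 - wd a T d * h2"
    unfolding F_def P1_def Q_def by simp
  then show ?thesis using eq nn integral_unique[OF ftc] by linarith
qed

definition IW where "IW a T c d = integral {c..d} (wk a T)"
definition IM where "IM a T c d = integral {c..d} (\<lambda>s. (s - (d + c)/2) * wk a T s)"

lemma wk_int: "a < 1 \<Longrightarrow> d < T \<Longrightarrow> wk a T integrable_on {c..d}"
  by (intro integrable_continuous_interval wk_cont)
lemma wkm_int: "a < 1 \<Longrightarrow> d < T \<Longrightarrow> (\<lambda>s. (s - e) * wk a T s) integrable_on {c..d}"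
  by (intro integrable_continuous_interval continuous_intros wk_cont)

lemma conv:
  assumes "a < 1" "d < T"
  shows "integral {c..d} (\<lambda>s. wk a T s * (g0 + g1*(d-s))) = (g0 + g1*(d-c)/2) * IW a T c d - g1 * IM a T c d"
proof -
  have h1: "((\<lambda>s. (g0 + g1*(d-c)/2) * wk a T s) has_integral ((g0 + g1*(d-c)/2) * IW a T c d)) {c..d}"
    unfolding IW_def by (intro has_integral_mult_right integrable_integral wk_int assms)
  have h2: "((\<lambda>s. g1 * ((s - (d + c)/2) * wk a T s)) has_integral (g1 * IM a T c d)) {c..d}"
    unfolding IM_def by (intro has_integral_mult_right integrable_integral wkm_int assms)
  have "((\<lambda>s. (g0 + g1*(d-c)/2) * wk a T s - g1 * ((s - (d + c)/2) * wk a T s)) has_integral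
        ((g0 + g1*(d-c)/2) * IW a T c d - g1 * IM a T c d)) {c..d}"
    by (rule has_integral_diff[OF h1 h2])
  moreover have "(\<lambda>s. (g0 + g1*(d-c)/2) * wk a T s - g1 * ((s - (d + c)/2) * wk a T s)) = (\<lambda>s. wk a T s * (g0 + g1*(d-s)))"
    by (rule ext) (simp add: field_simps)
  ultimately show ?thesis by (simp add: integral_unique)
qed

lemma piece3:
  assumes a: "0 < a" "a < 1" and cd: "c < d" "d < T" and u: "u > 0"
  defines "r \<equiv> d - c"
  shows "IW a T c d / r - 2 * IM a T c d / (r*(r+u)) \<ge> wk a T c + wd a T c * (r*(3*u+2*r)/(6*(r+u)))"
proof -
  have r: "r > 0" using cd r_def by simp
  define g0 where "g0 = u/(r*(r+u))"
  define g1 where "g1 = 2/(r*(r+u))"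
  have g0: "g0 \<ge> 0" and g1: "g1 \<ge> 0" using r u unfolding g0_def g1_def by auto
  have P: "0 \<le> 0 + 0*y + g0*y^2/2 + g1*y^3/6" if "0 \<le> y" for y
    using g0 g1 that by simp
  have pc: "integral {c..d} (\<lambda>s. wk a T s * (g0 + g1*(d-s))) \<ge>
     wk a T c * (0 + g0*(d-c) + g1*(d-c)^2/2) + wd a T c * (0 + 0*(d-c) + g0*(d-c)^2/2 + g1*(d-c)^3/6)
     - wk a T d * 0 - wd a T d * 0"
    by (rule piece[OF a _ cd(2)]) (use cd P in auto)
  have ru: "r*(r+u) > 0" using r u by simp
  have e1: "g0*r + g1*r^2/2 = 1" unfolding g0_def g1_def using r u by (simp add: divide_simps power2_eq_square) (simp add: algebra_simps)
  have ru2: "r+u > 0" using r u by simp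
  have e2: "g0*r^2/2 + g1*r^3/6 = r*(3*u+2*r)/(6*(r+u))" unfolding g0_def g1_def using r ru2
    by (simp add: divide_simps power2_eq_square power3_eq_cube) (simp add: algebra_simps)
  have e3: "g0 + g1*r/2 = 1/r" unfolding g0_def g1_def using r u by (simp add: divide_simps) (simp add: algebra_simps)
  have "integral {c..d} (\<lambda>s. wk a T s * (g0 + g1*(d-s))) = IW a T c d / r - 2 * IM a T c d / (r*(r+u))"
  proof -
    have "integral {c..d} (\<lambda>s. wk a T s * (g0 + g1*(d-s))) = (g0 + g1*r/2) * IW a T c d - g1 * IM a T c d"
      using conv[OF a(2) cd(2), of c g0 g1] unfolding r_def .
    also have "\<dots> = IW a T c d / r - 2 * IM a T c d / (r*(r+u))" unfolding e3 by (simp add: g1_def)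
    finally show ?thesis .
  qed
  moreover have "wk a T c * (0 + g0*r + g1*r^2/2) = wk a T c" using e1 by simp
  moreover have "wd a T c * (0 + 0*r + g0*r^2/2 + g1*r^3/6) = wd a T c * (r*(3*u+2*r)/(6*(r+u)))" using e2 by simp
  ultimately show ?thesis using pc unfolding r_def[symmetric] by linarith
qed

lemma piece2:
  assumes a: "0 < a" "a < 1" and cd: "c < d" "d < T" and r: "r > 0" and H: "H \<ge> 0"
  defines "q \<equiv> d - c"
  shows "- IW a T c d / q + 2 * IM a T c d / (q*r) \<ge> wd a T c * (H + q/2 + q^2/(6*r)) - wk a T d - wd a T d * H"
proof -
  have q: "q > 0" using cd q_def by simp
  define g0 where "g0 = 1/r - 1/q"
  define g1 where "g1 = -2/(q*r)"
  have P: "0 \<le> H + 1*y + g0*y^2/2 + g1*y^3/6" if "0 \<le> y" "y \<le> d - c" for y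
  proof -
    have y: "y \<le> q" using that q_def by simp
    have "H + 1*y + g0*y^2/2 + g1*y^3/6 = H + y*(2*q - y)/(2*q) + y^2*(3*q - 2*y)/(6*q*r)"
      unfolding g0_def g1_def using q r by (simp add: divide_simps power2_eq_square power3_eq_cube) (simp add: algebra_simps)
    moreover have "0 \<le> y*(2*q - y)/(2*q)" using y that q by (intro divide_nonneg_pos mult_nonneg_nonneg) auto
    moreover have "0 \<le> y^2*(3*q - 2*y)/(6*q*r)" using y that q r by (intro divide_nonneg_pos mult_nonneg_nonneg) auto
    ultimately show ?thesis using H by linarith
  qed
  have pc: "integral {c..d} (\<lambda>s. wk a T s * (g0 + g1*(d-s))) \<ge>
     wk a T c * (1 + g0*(d-c) + g1*(d-c)^2/2) + wd a T c * (H + 1*(d-c) + g0*(d-c)^2/2 + g1*(d-c)^3/6)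
     - wk a T d * 1 - wd a T d * H"
    by (rule piece[OF a _ cd(2)]) (use cd P in auto)
  have e1: "1 + g0*q + g1*q^2/2 = 0" unfolding g0_def g1_def using r q by (simp add: divide_simps power2_eq_square)
  have e2: "H + 1*q + g0*q^2/2 + g1*q^3/6 = H + q/2 + q^2/(6*r)" unfolding g0_def g1_def using r q
    by (simp add: divide_simps power2_eq_square power3_eq_cube) (simp add: algebra_simps)
  have e3: "g0 + g1*q/2 = -1/q" unfolding g0_def g1_def using r q by (simp add: field_simps)
  have "integral {c..d} (\<lambda>s. wk a T s * (g0 + g1*(d-s))) = - IW a T c d / q + 2 * IM a T c d / (q*r)"
  proof -
    have "integral {c..d} (\<lambda>s. wk a T s * (g0 + g1*(d-s))) = (g0 + g1*q/2) * IW a T c d - g1 * IM a T c d"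
      using conv[OF a(2) cd(2), of c g0 g1] unfolding q_def .
    also have "\<dots> = - IW a T c d / q + 2 * IM a T c d / (q*r)" unfolding e3 by (simp add: g1_def)
    finally show ?thesis .
  qed
  moreover have "wk a T c * (1 + g0*q + g1*q^2/2) = 0" using e1 by simp
  moreover have "wd a T c * (H + 1*q + g0*q^2/2 + g1*q^3/6) = wd a T c * (H + q/2 + q^2/(6*r))" using e2 by simp
  ultimately show ?thesis using pc unfolding q_def[symmetric] by linarith
qed

lemma piece1:
  assumes a: "0 < a" "a < 1" and cd: "c < d" "d < T" and q: "q > 0" and H: "H \<ge> q/2"
    and pq: "d - c \<le> 7/4 * q"
  shows "- 2 * IM a T c d / (q*((d-c)+q)) \<ge> - wd a T d * H"
proof -
  define p where "p = d - c"
  have p: "p > 0" using cd p_def by simp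
  have pq': "p \<le> 7/4*q" using pq p_def by simp
  define g0 where "g0 = -p/(q*(p+q))"
  define g1 where "g1 = 2/(q*(p+q))"
  have key: "p^3 \<le> 3*q^2*(p+q)"
  proof -
    have "p^3 = p*p*p" by (simp add: power3_eq_cube)
    also have "\<dots> \<le> p*(7/4*q)*(7/4*q)" using p pq' by (intro mult_mono) auto
    also have "\<dots> \<le> 3*q^2*(p+q)" using p q pq' by (simp add: power2_eq_square algebra_simps)
    finally show ?thesis .
  qed
  have P: "0 \<le> H + 0*y + g0*y^2/2 + g1*y^3/6" if "0 \<le> y" "y \<le> d - c" for y
  proof -
    have y: "y \<le> p" using that p_def by simp
    have qp: "q*(p+q) > 0" using p q by simp
    have "H + 0*y + g0*y^2/2 + g1*y^3/6 = H - y^2*(3*p - 2*y)/(6*q*(p+q))"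
      unfolding g0_def g1_def using qp by (simp add: divide_simps power2_eq_square power3_eq_cube) (simp add: algebra_simps)
    moreover have "y^2*(3*p - 2*y) \<le> p^3"
    proof -
      have "p^3 - y^2*(3*p - 2*y) = (p - y)^2 * (p + 2*y)" by (simp add: power2_eq_square power3_eq_cube algebra_simps)
      moreover have "0 \<le> (p - y)^2 * (p + 2*y)" using p that by simp
      ultimately show ?thesis by linarith
    qed
    then have "y^2*(3*p - 2*y)/(6*q*(p+q)) \<le> p^3/(6*q*(p+q))"
      using p q by (intro divide_right_mono) auto
    moreover have "p^3/(6*q*(p+q)) \<le> q/2" using key p q by (simp add: divide_simps power2_eq_square)
    ultimately show ?thesis using H by linarith
  qed
  have pc: "integral {c..d} (\<lambda>s. wk a T s * (g0 + g1*(d-s))) \<ge>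
     wk a T c * (0 + g0*(d-c) + g1*(d-c)^2/2) + wd a T c * (H + 0*(d-c) + g0*(d-c)^2/2 + g1*(d-c)^3/6)
     - wk a T d * 0 - wd a T d * H"
    by (rule piece[OF a _ cd(2)]) (use cd P in auto)
  have e1: "0 + g0*p + g1*p^2/2 = 0" unfolding g0_def g1_def using p q by (simp add: divide_simps power2_eq_square)
  have e2: "0 \<le> H + 0*p + g0*p^2/2 + g1*p^3/6" using P[of p] p p_def by simp
  have e3: "g0 + g1*p/2 = 0" unfolding g0_def g1_def using p q by (simp add: divide_simps)
  have "integral {c..d} (\<lambda>s. wk a T s * (g0 + g1*(d-s))) = - 2 * IM a T c d / (q*(p+q))"
  proof -
    have "integral {c..d} (\<lambda>s. wk a T s * (g0 + g1*(d-s))) = (g0 + g1*p/2) * IW a T c d - g1 * IM a T c d"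
      using conv[OF a(2) cd(2), of c g0 g1] unfolding p_def .
    also have "\<dots> = - 2 * IM a T c d / (q*(p+q))" unfolding e3 by (simp add: g1_def)
    finally show ?thesis .
  qed
  moreover have "0 \<le> wd a T c * (H + 0*p + g0*p^2/2 + g1*p^3/6)" using e2 wd_nonneg[OF a] by simp
  ultimately show ?thesis using pc e1 unfolding p_def[symmetric] by simp
qed

lemma Gamma2a: fixes a :: real shows "0 < a \<Longrightarrow> a < 1 \<Longrightarrow> Gamma (2 - a) = (1 - a) * Gamma (1 - a)"
proof -
  assume "0 < a" "a < 1"
  have "(1 - a) \<notin> \<int>\<^sub>\<le>\<^sub>0"
  proof
    assume "1 - a \<in> \<int>\<^sub>\<le>\<^sub>0"
    then have "1 - a \<le> 0" by (rule nonpos_Ints_nonpos)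
    with \<open>a < 1\<close> show False by simp
  qed
  from Gamma_plus1[OF this] show ?thesis by (simp add: algebra_simps)
qed

lemma omega_wk: "omega (1-a) (T - s) = wk a T s"
  unfolding omega_def wk_def by simp

lemma tau_pos: "\<forall>k\<in>{1..N}. t (k-1) < t k \<Longrightarrow> 1 \<le> k \<Longrightarrow> k \<le> N \<Longrightarrow> tau t k > 0"
  unfolding tau_def by auto

lemma t_mono: fixes t :: "nat \<Rightarrow> real" shows "\<forall>k\<in>{1..N}. t (k-1) < t k \<Longrightarrow> i \<le> j \<Longrightarrow> j \<le> N \<Longrightarrow> t i \<le> t j"
proof (induction j)
  case 0 then show ?case by simp
next
  case (Suc j)
  show ?case
  proof (cases "i = Suc j")
    case True then show ?thesis by simp
  next
    case False
    then have "i \<le> j" using Suc by simp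
    then have "t i \<le> t j" using Suc by simp
    moreover have "t j < t (Suc j)"
    proof -
      have "Suc j \<in> {1..N}" using Suc.prems(3) by simp
      then have "t (Suc j - 1) < t (Suc j)" using Suc.prems(1) by blast
      then show ?thesis by simp
    qed
    ultimately show ?thesis by simp
  qed
qed

lemma tsig_facts:
  assumes "0 < a" "a < 1" "\<forall>k\<in>{1..N}. t (k-1) < t k" "1 \<le> n" "n \<le> N"
  shows "t (n-1) < tsig t a n" "tsig t a n < t n" "tsig t a n - t (n-1) = (1 - a/2) * tau t n"
proof -
  have "tau t n > 0" using tau_pos assms by blast
  moreover have "(1 - a/2) * tau t n > 0" using calculation assms(2) by simp
  ultimately show "t (n-1) < tsig t a n" "tsig t a n < t n" "tsig t a n - t (n-1) = (1 - a/2) * tau t n"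
    using assms(1,2) unfolding tsig_def tau_def by (auto simp: algebra_simps)
qed

lemma acoef_eq:
  assumes "0 < a" "a < 1" "\<forall>k\<in>{1..N}. t (k-1) < t k" "1 \<le> k" "k < n" "n \<le> N"
  shows "acoef t a n k = IW a (tsig t a n) (t (k-1)) (t k) / tau t k"
proof -
  have "t k \<le> t (n-1)" using t_mono[OF assms(3)] assms by simp
  moreover have "t (n-1) < tsig t a n" using tsig_facts[OF assms(1-3)] assms by simp
  ultimately have "min (t k) (tsig t a n) = t k" by simp
  then show ?thesis unfolding acoef_def IW_def omega_wk by simp
qed

lemma bcoef_eq:
  shows "bcoef t a n k = 2 / (tau t k * (tau t k + tau t (k+1))) * IM a (tsig t a n) (t (k-1)) (t k)"
  unfolding bcoef_def IM_def omega_wk by simp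

lemma an_eq:
  assumes a: "0 < a" "a < 1" and tm: "\<forall>k\<in>{1..N}. t (k-1) < t k" and n: "1 \<le> n" "n \<le> N"
  shows "acoef t a n n = ((1 - a/2) * tau t n) powr (1 - a) / (tau t n * Gamma (2 - a))"
proof -
  define T where "T = tsig t a n"
  note tf = tsig_facts[OF a tm n, folded T_def]
  have mn: "min (t n) T = T" using tf by simp
  have g: "Gamma (1 - a) > 0" using Gamma1a_pos a by simp
  define Phi where "Phi s = - ((T - s) powr (1 - a)) / ((1 - a) * Gamma (1 - a))" for s
  have cont: "continuous_on {t (n-1)..T} Phi"
  proof -
    have g': "Gamma (1 - a) \<noteq> 0" using g by simp
    show ?thesis unfolding Phi_def by (intro continuous_intros continuous_on_powr') (use a g' tf in auto)
  qed
  have der: "(Phi has_vector_derivative omega (1-a) (T - s)) (at s)" if "s \<in> {t (n-1)<..<T}" for s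
  proof -
    have sT: "s < T" using that by simp
    have "((\<lambda>s. (T - s) powr (1 - a)) has_real_derivative (- (1-a) * (T - s) powr ((1-a) - 1))) (at s)"
      by (rule powr_deriv_T[OF sT])
    from DERIV_cdivide[OF DERIV_minus[OF this], of "(1 - a) * Gamma (1 - a)"]
    have d1: "(Phi has_real_derivative (- (- (1-a) * (T - s) powr ((1-a) - 1)) / ((1 - a) * Gamma (1 - a)))) (at s)"
      unfolding Phi_def by simp
    have e: "- (- (1-a) * (T - s) powr ((1-a) - 1)) / ((1 - a) * Gamma (1 - a)) = (T - s) powr (- a) / Gamma (1 - a)"
    proof -
      have b: "1 - a \<noteq> 0" using a by simp
      have ex: "(1-a) - 1 = - a" by simp
      have "- (- (1-a) * (T - s) powr ((1-a) - 1)) = (1-a) * (T - s) powr (- a)"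
        unfolding ex by (simp only: mult_minus_left minus_minus)
      then have "- (- (1-a) * (T - s) powr ((1-a) - 1)) / ((1 - a) * Gamma (1 - a)) =
         ((1-a) * (T - s) powr (- a)) / ((1 - a) * Gamma (1 - a))" by (rule arg_cong)
      also have "\<dots> = (T - s) powr (- a) / Gamma (1 - a)" using b by (rule mult_divide_mult_cancel_left)
      finally show ?thesis .
    qed
    have "(Phi has_real_derivative (T - s) powr (- a) / Gamma (1 - a)) (at s)"
      using d1 unfolding e .
    then show ?thesis unfolding omega_wk wk_def by (simp add: has_real_derivative_iff_has_vector_derivative)
  qed
  have "((\<lambda>s. omega (1-a) (T - s)) has_integral (Phi T - Phi (t (n-1)))) {t (n-1)..T}"
    by (rule fundamental_theorem_of_calculus_interior[OF _ cont der]) (use tf in auto)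
  then have intg: "integral {t (n-1)..T} (\<lambda>s. omega (1-a) (T - s)) = (T - t (n-1)) powr (1 - a) / ((1 - a) * Gamma (1 - a))"
    using a by (simp add: integral_unique Phi_def)
  have "acoef t a n n = (1 / tau t n) * ((T - t (n-1)) powr (1 - a) / ((1 - a) * Gamma (1 - a)))"
    unfolding acoef_def T_def[symmetric] mn intg by simp
  also have "\<dots> = ((1 - a/2) * tau t n) powr (1 - a) / (tau t n * Gamma (2 - a))"
    unfolding tf(3) Gamma2a[OF a, symmetric] by simp
  finally show ?thesis .
qed

lemma ivl:
  assumes a: "0 < a" "a < 1" and tm: "\<forall>k\<in>{1..N}. t (k-1) < t k" and k: "1 \<le> k" "k < n" and n: "n \<le> N"
  shows "t (k-1) < t k" "t k < tsig t a n" "t k - t (k-1) = tau t k"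
proof -
  show "t (k-1) < t k" using tm k n by auto
  have "t k \<le> t (n-1)" using t_mono[OF tm] k n by simp
  moreover have "t (n-1) < tsig t a n" using tsig_facts[OF a tm] k n by simp
  ultimately show "t k < tsig t a n" by simp
  show "t k - t (k-1) = tau t k" unfolding tau_def by simp
qed

lemma idB: "(q::real) > 0 \<Longrightarrow> r > 0 \<Longrightarrow> (2 / (q * (q + r)) * X) / (r / q) + 2 / (q * (q + r)) * X = 2 * X / (q * r)"
  by (simp add: divide_simps) (simp add: algebra_simps)

lemma idA: "(q::real) > 0 \<Longrightarrow> p > 0 \<Longrightarrow> (2 / (p * (p + q)) * X) / (q / p) = 2 * X / (q * (p + q))"
  by (simp add: divide_simps)

lemma piece3':
  assumes "0 < a" "a < 1" "c < d" "d < T" "u > 0" "d - c = r"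
  shows "IW a T c d / r - 2 * IM a T c d / (r*(r+u)) \<ge> wk a T c + wd a T c * (r*(3*u+2*r)/(6*(r+u)))"
  using piece3[OF assms(1-5)] unfolding assms(6) .

lemma piece2':
  assumes "0 < a" "a < 1" "c < d" "d < T" "r > 0" "H \<ge> 0" "d - c = q"
  shows "- IW a T c d / q + 2 * IM a T c d / (q*r) \<ge> wd a T c * (H + q/2 + q^2/(6*r)) - wk a T d - wd a T d * H"
  using piece2[OF assms(1-6)] unfolding assms(7) .

lemma piece1':
  assumes "0 < a" "a < 1" "c < d" "d < T" "q > 0" "H \<ge> q/2" "p \<le> 7/4 * q" "d - c = p"
  shows "- 2 * IM a T c d / (q*(p+q)) \<ge> - wd a T d * H"
  using piece1[OF assms(1-6)] assms(7) unfolding assms(8) by simp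

lemma M1:
  assumes a: "0 < a" "a < 1" and tm: "\<forall>k\<in>{1..N}. t (k-1) < t k" and n: "2 \<le> n" "n \<le> N"
  shows "0 \<le> Bcoef t a n 1"
proof -
  define T where "T = tsig t a n"
  note iv = ivl[OF a tm _ _ n(2), of 1, folded T_def]
  have u: "tau t 2 > 0" using tau_pos[OF tm] n by simp
  have B: "Bcoef t a n 1 = IW a T (t 0) (t 1) / tau t 1 - 2 * IM a T (t 0) (t 1) / (tau t 1 * (tau t 1 + tau t 2))"
    unfolding Bcoef_def using n acoef_eq[OF a tm, of 1 n] bcoef_eq[of t a n 1] by (simp add: T_def numeral_2_eq_2)
  have "IW a T (t 0) (t 1) / tau t 1 - 2 * IM a T (t 0) (t 1) / (tau t 1 * (tau t 1 + tau t 2)) \<ge>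
     wk a T (t 0) + wd a T (t 0) * (tau t 1 * (3 * tau t 2 + 2 * tau t 1) / (6 * (tau t 1 + tau t 2)))"
    using piece3'[OF a _ _ u, of "t 0" "t 1" T] iv n by simp
  moreover have "0 \<le> wk a T (t 0)" using wk_nonneg a by simp
  moreover have "0 \<le> wd a T (t 0) * (tau t 1 * (3 * tau t 2 + 2 * tau t 1) / (6 * (tau t 1 + tau t 2)))"
    using wd_nonneg[OF a] u iv n by (intro mult_nonneg_nonneg divide_nonneg_pos) auto
  ultimately show ?thesis unfolding B by linarith
qed

lemma M2:
  assumes a: "0 < a" "a < 1" and tm: "\<forall>k\<in>{1..N}. t (k-1) < t k"
    and ratio: "\<forall>k\<in>{2..N}. rr t k \<ge> 4/7"
    and k: "1 \<le> k" "k + 2 \<le> n" and n: "n \<le> N"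
  shows "Bcoef t a n k \<le> Bcoef t a n (k+1)"
proof -
  define T where "T = tsig t a n"
  define q where "q = tau t k"
  define r where "r = tau t (k+1)"
  define u where "u = tau t (k+2)"
  have q: "q > 0" unfolding q_def using tau_pos[OF tm] k n by simp
  have r: "r > 0" unfolding r_def using tau_pos[OF tm] k n by simp
  have u: "u > 0" unfolding u_def using tau_pos[OF tm] k n by simp
  have ivk: "t (k-1) < t k" "t k < T" "t k - t (k-1) = q"
    using ivl[OF a tm k(1) _ n, folded T_def q_def] k by auto
  have ivk1: "t k < t (k+1)" "t (k+1) < T" "t (k+1) - t k = r"
    using ivl[OF a tm _ _ n, of "k+1", folded T_def] k unfolding r_def by auto
  define IW2 where "IW2 = IW a T (t (k-1)) (t k)"
  define IM2 where "IM2 = IM a T (t (k-1)) (t k)"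
  define IW3 where "IW3 = IW a T (t k) (t (k+1))"
  define IM3 where "IM3 = IM a T (t k) (t (k+1))"
  define H3 where "H3 = r*(3*u+2*r)/(6*(r+u))"
  have H3: "H3 \<ge> 0" unfolding H3_def using r u by simp
  have P3: "IW3 / r - 2 * IM3 / (r*(r+u)) \<ge> wk a T (t k) + wd a T (t k) * H3"
    unfolding IW3_def IM3_def H3_def by (rule piece3'[OF a ivk1(1,2) u ivk1(3)])
  have P2: "- IW2 / q + 2 * IM2 / (q*r) \<ge> wd a T (t (k-1)) * (H3 + q/2 + q^2/(6*r)) - wk a T (t k) - wd a T (t k) * H3"
    unfolding IW2_def IM2_def by (rule piece2'[OF a ivk(1) _ r H3 ivk(3)]) (use ivk in simp)
  have rrk1: "rr t (k+1) = r / q" unfolding rr_def r_def q_def by simp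
  have Bk1: "Bcoef t a n (k+1) = IW3 / r + (2 / (q * (q + r)) * IM2) / (r / q) - 2 * IM3 / (r*(r+u))"
  proof -
    have "Bcoef t a n (k+1) = acoef t a n (k+1) + bcoef t a n k / rr t (k+1) - bcoef t a n (k+1)"
      unfolding Bcoef_def using k by simp
    moreover have "acoef t a n (k+1) = IW3 / r"
      unfolding IW3_def r_def T_def using acoef_eq[OF a tm, of "k+1" n] k n by simp
    moreover have "bcoef t a n k = 2 / (q * (q + r)) * IM2"
      unfolding IM2_def q_def r_def T_def by (simp add: bcoef_eq)
    moreover have "bcoef t a n (k+1) = 2 * IM3 / (r*(r+u))"
      unfolding IM3_def u_def r_def T_def by (simp add: bcoef_eq)
    ultimately show ?thesis unfolding rrk1 by simp
  qed
  have ak: "acoef t a n k = IW2 / q"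
    unfolding IW2_def q_def T_def using acoef_eq[OF a tm, of k n] k n by simp
  have wdnn: "0 \<le> wd a T (t (k-1)) * (H3 + q/2 + q^2/(6*r))"
    using wd_nonneg[OF a] H3 q r by (intro mult_nonneg_nonneg add_nonneg_nonneg) auto
  show ?thesis
  proof (cases "k = 1")
    case True
    have Bk: "Bcoef t a n k = IW2 / q - 2 / (q * (q + r)) * IM2"
      unfolding Bcoef_def using True k ak bcoef_eq[of t a n 1]
      by (simp add: IM2_def q_def r_def T_def)
    show ?thesis unfolding Bk Bk1 using idB[OF q r, of IM2] P3 P2 wdnn by linarith
  next
    case False
    then have k2: "k \<ge> 2" using k by simp
    define p where "p = tau t (k-1)"
    have p: "p > 0" unfolding p_def using tau_pos[OF tm] k2 k n by simp
    have ivkm: "t (k-1-1) < t (k-1)" "t (k-1) < T" "t (k-1) - t (k-1-1) = p"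
      using ivl[OF a tm _ _ n, of "k-1", folded T_def] k k2 unfolding p_def by auto
    have pq: "p \<le> 7/4 * q"
    proof -
      have "rr t k \<ge> 4/7" using ratio k2 k n by simp
      then have "q / p \<ge> 4/7" unfolding rr_def p_def q_def by simp
      then show ?thesis using p by (simp add: field_simps)
    qed
    define IM1 where "IM1 = IM a T (t (k-1-1)) (t (k-1))"
    have P1: "- 2 * IM1 / (q*(p+q)) \<ge> - wd a T (t (k-1)) * (H3 + q/2 + q^2/(6*r))"
      unfolding IM1_def by (rule piece1'[OF a ivkm(1,2) q _ pq ivkm(3)]) (use H3 q r in simp)
    have Bk: "Bcoef t a n k = IW2 / q + 2 * IM1 / (q * (p + q)) - 2 / (q * (q + r)) * IM2"
    proof -
      have "Bcoef t a n k = acoef t a n k + bcoef t a n (k-1) / rr t k - bcoef t a n k"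
        unfolding Bcoef_def using k k2 by simp
      moreover have "bcoef t a n (k-1) = 2 / (p * (p + q)) * IM1"
        unfolding IM1_def p_def q_def T_def using k2 by (simp add: bcoef_eq)
      moreover have "rr t k = q / p" unfolding rr_def q_def p_def by simp
      moreover have "bcoef t a n k = 2 / (q * (q + r)) * IM2"
        unfolding IM2_def q_def r_def T_def by (simp add: bcoef_eq)
      ultimately show ?thesis using ak idA[OF q p, of IM1] by simp
    qed
    show ?thesis unfolding Bk Bk1 using idB[OF q r, of IM2] P3 P2 P1 wdnn by linarith
  qed
qed

lemma M3:
  assumes a: "0 < a" "a < 1" and tm: "\<forall>k\<in>{1..N}. t (k-1) < t k"
    and ratio: "\<forall>k\<in>{2..N}. rr t k \<ge> 4/7"
    and n: "2 \<le> n" "n \<le> N"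
  shows "Bcoef t a n n - Bcoef t a n (n-1) \<ge> acoef t a n n - wk a (tsig t a n) (t (n-1))"
proof -
  define T where "T = tsig t a n"
  define k where "k = n - 1"
  have k: "1 \<le> k" "k < n" "k + 1 = n" using n unfolding k_def by auto
  define q where "q = tau t k"
  define r where "r = tau t n"
  have q: "q > 0" unfolding q_def using tau_pos[OF tm] k n by simp
  have r: "r > 0" unfolding r_def using tau_pos[OF tm] k n by simp
  have ivk: "t (k-1) < t k" "t k < T" "t k - t (k-1) = q"
    using ivl[OF a tm k(1) k(2) n(2), folded T_def q_def] by auto
  define IW2 where "IW2 = IW a T (t (k-1)) (t k)"
  define IM2 where "IM2 = IM a T (t (k-1)) (t k)"
  have P2: "- IW2 / q + 2 * IM2 / (q*r) \<ge> wd a T (t (k-1)) * (0 + q/2 + q^2/(6*r)) - wk a T (t k) - wd a T (t k) * 0"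
    unfolding IW2_def IM2_def by (rule piece2'[OF a ivk(1,2) r _ ivk(3)]) simp
  have Bn: "Bcoef t a n n = acoef t a n n + (2 / (q * (q + r)) * IM2) / (r / q)"
  proof -
    have "Bcoef t a n n = acoef t a n n + bcoef t a n k / rr t n"
      unfolding Bcoef_def k_def using n by simp
    moreover have "bcoef t a n k = 2 / (q * (q + r)) * IM2"
      unfolding IM2_def q_def r_def T_def using k by (simp add: bcoef_eq)
    moreover have "rr t n = r / q" unfolding rr_def r_def q_def k_def by simp
    ultimately show ?thesis by simp
  qed
  have ak: "acoef t a n k = IW2 / q"
    unfolding IW2_def q_def T_def using acoef_eq[OF a tm k(1) k(2) n(2)] by simp
  have wdnn: "0 \<le> wd a T (t (k-1)) * (0 + q/2 + q^2/(6*r))"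
    using wd_nonneg[OF a] q r by (intro mult_nonneg_nonneg add_nonneg_nonneg) auto
  have kn: "n - 1 = k" unfolding k_def by simp
  show ?thesis
  proof (cases "k = 1")
    case True
    have Bk: "Bcoef t a n k = IW2 / q - 2 / (q * (q + r)) * IM2"
      unfolding Bcoef_def using True n ak bcoef_eq[of t a n 1] k
      by (simp add: IM2_def q_def r_def T_def)
    show ?thesis unfolding kn Bk Bn T_def[symmetric] using idB[OF q r, of IM2] P2 wdnn by simp
  next
    case False
    then have k2: "k \<ge> 2" using k by simp
    define p where "p = tau t (k-1)"
    have p: "p > 0" unfolding p_def using tau_pos[OF tm] k2 k n by simp
    have ivkm: "t (k-1-1) < t (k-1)" "t (k-1) < T" "t (k-1) - t (k-1-1) = p"
      using ivl[OF a tm _ _ n(2), of "k-1", folded T_def] k k2 unfolding p_def by auto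
    have pq: "p \<le> 7/4 * q"
    proof -
      have "rr t k \<ge> 4/7" using ratio k2 k n by simp
      then have "q / p \<ge> 4/7" unfolding rr_def p_def q_def by simp
      then show ?thesis using p by (simp add: field_simps)
    qed
    define IM1 where "IM1 = IM a T (t (k-1-1)) (t (k-1))"
    have P1: "- 2 * IM1 / (q*(p+q)) \<ge> - wd a T (t (k-1)) * (0 + q/2 + q^2/(6*r))"
      unfolding IM1_def by (rule piece1'[OF a ivkm(1,2) q _ pq ivkm(3)]) (use q r in simp)
    have Bk: "Bcoef t a n k = IW2 / q + 2 * IM1 / (q * (p + q)) - 2 / (q * (q + r)) * IM2"
    proof -
      have "Bcoef t a n k = acoef t a n k + bcoef t a n (k-1) / rr t k - bcoef t a n k"
        unfolding Bcoef_def using k k2 by simp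
      moreover have "bcoef t a n (k-1) = 2 / (p * (p + q)) * IM1"
        unfolding IM1_def p_def q_def T_def using k2 by (simp add: bcoef_eq)
      moreover have "rr t k = q / p" unfolding rr_def q_def p_def by simp
      moreover have "bcoef t a n k = 2 / (q * (q + r)) * IM2"
        unfolding IM2_def q_def r_def T_def using k by (simp add: bcoef_eq)
      ultimately show ?thesis using ak idA[OF q p, of IM1] by simp
    qed
    show ?thesis unfolding kn Bk Bn T_def[symmetric] using idB[OF q r, of IM2] P2 P1 wdnn by simp
  qed
qed

lemma Xbound:
  fixes a m C tau :: real
  assumes a: "0 < a" "a < 1" and tau: "tau > 0" and m: "m > 0" and C: "C > 0"
    and tb: "tau \<le> (4 / (11 * (1 - a/2) * m * C * Gamma (2 - a))) powr (1/a)"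
  shows "m * C \<le> ((1 - a/2) * tau) powr (-a) / Gamma (2 - a)"
proof -
  have G: "Gamma (2 - a) > 0" by (rule Gamma_real_pos) (use a in simp)
  define Q where "Q = 4 / (11 * (1 - a/2) * m * C * Gamma (2 - a))"
  have Q: "Q > 0" unfolding Q_def using a m C G by simp
  have "tau powr a \<le> (Q powr (1/a)) powr a"
    using tb tau a unfolding Q_def[symmetric] by (intro powr_mono2) auto
  also have "\<dots> = Q" using a Q by (simp add: powr_powr)
  finally have tq: "tau powr a \<le> Q" .
  have tpa: "tau powr a > 0" using tau by simp
  have "((1 - a/2) * tau) powr (-a) \<ge> tau powr (-a)"
    using a tau by (intro powr_mono2') (auto simp: mult_le_cancel_right1)
  moreover have "tau powr (-a) = 1 / tau powr a" by (simp add: powr_minus divide_inverse)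
  moreover have "1 / tau powr a \<ge> 1 / Q" using tq tpa Q by (intro divide_left_mono) auto
  moreover have "1 / Q \<ge> m * C * Gamma (2 - a)"
  proof -
    have "1 / Q = 11 * (1 - a/2) / 4 * (m * C * Gamma (2 - a))" unfolding Q_def by simp
    moreover have "11 * (1 - a/2) / 4 \<ge> 1" using a by simp
    moreover have "m * C * Gamma (2 - a) > 0" using m C G by simp
    ultimately have "1 * (m * C * Gamma (2 - a)) \<le> 11 * (1 - a/2) / 4 * (m * C * Gamma (2 - a))"
      by (intro mult_right_mono) auto
    then show ?thesis using \<open>1 / Q = _\<close> by simp
  qed
  ultimately have "((1 - a/2) * tau) powr (-a) \<ge> m * C * Gamma (2 - a)" by linarith
  then show ?thesis using G by (simp add: field_simps)
qed

lemma an_split: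
  assumes a: "0 < a" "a < 1" and tm: "\<forall>k\<in>{1..N}. t (k-1) < t k" and n: "1 \<le> n" "n \<le> N"
  shows "acoef t a n n = (1 - a/2) * (((1 - a/2) * tau t n) powr (-a) / Gamma (2 - a))"
    and "wk a (tsig t a n) (t (n-1)) = (1 - a) * (((1 - a/2) * tau t n) powr (-a) / Gamma (2 - a))"
proof -
  have tp: "tau t n > 0" using tau_pos[OF tm] n by simp
  define y where "y = (1 - a/2) * tau t n"
  have y: "y > 0" unfolding y_def using tp a by simp
  have "y powr (1 - a) = y powr (1 + (-a))" by simp
  also have "\<dots> = y powr 1 * y powr (-a)" by (rule powr_add)
  also have "\<dots> = y * y powr (-a)" using y by simp
  finally have "y powr (1 - a) = y * y powr (-a)" .
  then have "acoef t a n n = y * y powr (-a) / (tau t n * Gamma (2 - a))"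
    using an_eq[OF a tm n] unfolding y_def by simp
  also have "\<dots> = (1 - a/2) * (y powr (-a) / Gamma (2 - a))"
    unfolding y_def using tp by simp
  finally show "acoef t a n n = (1 - a/2) * (((1 - a/2) * tau t n) powr (-a) / Gamma (2 - a))"
    unfolding y_def .
  have "tsig t a n - t (n-1) = y" unfolding y_def by (rule tsig_facts(3)[OF a tm n])
  then have "wk a (tsig t a n) (t (n-1)) = y powr (-a) / Gamma (1 - a)" unfolding wk_def by simp
  also have "\<dots> = ((1 - a) * y powr (-a)) / ((1 - a) * Gamma (1 - a))"
    using a by (intro mult_divide_mult_cancel_left[symmetric]) simp
  also have "\<dots> = (1 - a) * (y powr (-a) / Gamma (2 - a))" unfolding Gamma2a[OF a] by simp
  finally show "wk a (tsig t a n) (t (n-1)) = (1 - a) * (((1 - a/2) * tau t n) powr (-a) / Gamma (2 - a))"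
    unfolding y_def .
qed

lemma fbound:
  fixes f :: "real \<Rightarrow> real"
  assumes b: "\<beta> > 0" and fb: "f \<beta> = 0" "f (-\<beta>) = 0"
    and diff: "\<forall>x\<in>{-\<beta>..\<beta>}. f differentiable (at x)"
    and kap: "\<forall>x\<in>{-\<beta>..\<beta>}. \<bar>deriv f x\<bar> \<le> \<kappa>"
    and z: "-\<beta> \<le> z" "z \<le> \<beta>"
  shows "f z + \<kappa> * z \<le> \<kappa> * \<beta>" "- (\<kappa> * \<beta>) \<le> f z + \<kappa> * z"
proof -
  have k0: "\<kappa> \<ge> 0" using kap b by (metis abs_ge_zero atLeastAtMost_iff less_le_not_le neg_le_0_iff_le order_trans)
  have D: "\<And>x. -\<beta> \<le> x \<Longrightarrow> x \<le> \<beta> \<Longrightarrow> (f has_real_derivative deriv f x) (at x)"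
    using diff DERIV_deriv_iff_real_differentiable by auto
  show "f z + \<kappa> * z \<le> \<kappa> * \<beta>"
  proof (cases "z < \<beta>")
    case True
    obtain \<xi> where xi: "\<xi> > z" "\<xi> < \<beta>" "f \<beta> - f z = (\<beta> - z) * deriv f \<xi>"
      using MVT2[OF True, of f "deriv f"] D z by fastforce
    have "\<bar>deriv f \<xi>\<bar> \<le> \<kappa>" using kap xi z by auto
    then have "- ((\<beta> - z) * deriv f \<xi>) \<le> (\<beta> - z) * \<kappa>"
      using True by (metis abs_le_iff minus_mult_right mult_left_mono diff_ge_0_iff_ge less_imp_le)
    then show ?thesis using xi fb by (simp add: algebra_simps)
  next
    case False then show ?thesis using z fb by simp
  qed
  show "- (\<kappa> * \<beta>) \<le> f z + \<kappa> * z"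
  proof (cases "-\<beta> < z")
    case True
    obtain \<xi> where xi: "\<xi> > -\<beta>" "\<xi> < z" "f z - f (-\<beta>) = (z - -\<beta>) * deriv f \<xi>"
      using MVT2[OF True, of f "deriv f"] D z by fastforce
    have "\<bar>deriv f \<xi>\<bar> \<le> \<kappa>" using kap xi z by auto
    then have "- ((z + \<beta>) * \<kappa>) \<le> (z + \<beta>) * deriv f \<xi>"
      using True by (metis abs_le_iff minus_mult_right mult_left_mono le_add_same_cancel1 neg_le_iff_le add.commute diff_ge_0_iff_ge less_imp_le diff_minus_eq_add)
    then show ?thesis using xi fb by (simp add: algebra_simps)
  next
    case False then have "z = -\<beta>" using z by simp
    then show ?thesis using fb by simp
  qed
qed

lemma nonlin_props:
  assumes nonlin:
      "(F = dwF \<and> f = dwf \<and> \<beta> = 1) \<or>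
       (\<exists>\<theta> \<theta>c. 0 < \<theta> \<and> \<theta> < \<theta>c \<and> F = fhF \<theta> \<theta>c \<and> f = fhf \<theta> \<theta>c
          \<and> 0 < \<beta> \<and> \<beta> < 1 \<and> f \<beta> = 0)"
  shows "\<beta> > 0" "f \<beta> = 0" "f (-\<beta>) = 0" "\<forall>x\<in>{-\<beta>..\<beta>}. f differentiable (at x)"
proof -
  have "\<beta> > 0 \<and> f \<beta> = 0 \<and> f (-\<beta>) = 0 \<and> (\<forall>x\<in>{-\<beta>..\<beta>}. f differentiable (at x))"
    using nonlin
  proof
    assume h: "F = dwF \<and> f = dwf \<and> \<beta> = 1"
    have "\<forall>x. dwf differentiable (at x)"
      unfolding dwf_def by (auto intro!: derivative_eq_intros simp: differentiable_def has_field_derivative_def[symmetric] intro: exI)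
    then show ?thesis using h by (simp add: dwf_def)
  next
    assume "\<exists>\<theta> \<theta>c. 0 < \<theta> \<and> \<theta> < \<theta>c \<and> F = fhF \<theta> \<theta>c \<and> f = fhf \<theta> \<theta>c \<and> 0 < \<beta> \<and> \<beta> < 1 \<and> f \<beta> = 0"
    then obtain \<theta> \<theta>c where h: "0 < \<theta>" "f = fhf \<theta> \<theta>c" "0 < \<beta>" "\<beta> < 1" "f \<beta> = 0" by blast
    have "ln ((1 - - \<beta>) / (1 + - \<beta>)) = - ln ((1 - \<beta>) / (1 + \<beta>))"
      using h by (simp add: ln_div)
    then have "f (-\<beta>) = - f \<beta>" unfolding h(2) fhf_def by simp
    moreover have "fhf \<theta> \<theta>c differentiable (at x)" if "x \<in> {-\<beta>..\<beta>}" for x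
    proof -
      have x: "-1 < x" "x < 1" using that h by auto
      have "\<exists>D. ((\<lambda>x. \<theta>/2 * ln ((1-x)/(1+x)) + \<theta>c * x) has_real_derivative D) (at x)"
        using x by (intro exI derivative_eq_intros refl) auto
      then show ?thesis unfolding fhf_def by (auto simp: real_differentiable_def)
    qed
    ultimately show ?thesis using h by simp
  qed
  then show "\<beta> > 0" "f \<beta> = 0" "f (-\<beta>) = 0" "\<forall>x\<in>{-\<beta>..\<beta>}. f differentiable (at x)" by auto
qed

lemma sumlow:
  fixes Bc v :: "nat \<Rightarrow> real"
  assumes "1 \<le> m" "0 \<le> Bc 1" "\<And>k. 1 \<le> k \<Longrightarrow> k < m \<Longrightarrow> Bc k \<le> Bc (k+1)" "\<And>k. k < m \<Longrightarrow> v k \<le> \<beta>"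
  shows "Bc m * (v m - \<beta>) \<le> (\<Sum>k=1..m. Bc k * (v k - v (k-1))) \<and> 0 \<le> Bc m"
  using assms
proof (induction m)
  case 0 then show ?case by simp
next
  case (Suc m)
  show ?case
  proof (cases "m = 0")
    case True
    have "v 0 \<le> \<beta>" using Suc.prems(4)[of 0] True by simp
    then have "Bc 1 * (v 1 - \<beta>) \<le> Bc 1 * (v 1 - v 0)" using Suc.prems(2) by (intro mult_left_mono) auto
    then show ?thesis using True Suc.prems(2) by simp
  next
    case False
    then have m1: "1 \<le> m" by simp
    have IH: "Bc m * (v m - \<beta>) \<le> (\<Sum>k=1..m. Bc k * (v k - v (k-1))) \<and> 0 \<le> Bc m"
      using Suc.IH[OF m1 Suc.prems(2)] Suc.prems(3,4) by simp
    have mono: "Bc m \<le> Bc (Suc m)" using Suc.prems(3)[of m] m1 by simp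
    have vm: "v m \<le> \<beta>" using Suc.prems(4)[of m] by simp
    have "0 \<le> (Bc (Suc m) - Bc m) * (\<beta> - v m)" using mono vm by simp
    moreover have "(\<Sum>k=1..Suc m. Bc k * (v k - v (k-1))) = (\<Sum>k=1..m. Bc k * (v k - v (k-1))) + Bc (Suc m) * (v (Suc m) - v m)"
      using m1 by simp
    ultimately show ?thesis using IH mono by (simp add: algebra_simps)
  qed
qed

lemma ptwise:
  fixes Bn Bp S x0 x1 Ln Ln1 V Ff hv m e h s \<kappa> K2 \<beta> :: real
  assumes eq: "Bn * (x0 - x1) + S = m * (e^2 * ((1-s)*Ln + s*Ln1) + V*Ff - \<kappa>*V*(((1-s)*x0 + s*x1) - hv))"
    and S: "S \<ge> Bp * (x1 - \<beta>)" and x1: "x1 \<le> \<beta>" and Ln: "Ln \<le> 0" and Ln1: "Ln1 \<le> 4*(\<beta> - x1)/h^2"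
    and V: "0 \<le> V" "V \<le> K2" and Ff: "Ff + \<kappa>*hv \<le> \<kappa>*\<beta>" and k: "\<kappa> \<ge> 0" and m: "m > 0"
    and s: "0 < s" "s < 1" and Bn: "Bn > 0" and gap: "Bn - Bp \<ge> m * s * (4*e^2/h^2 + \<kappa>*K2)"
  shows "x0 \<le> \<beta>"
proof (rule ccontr)
  assume "\<not> x0 \<le> \<beta>"
  define x where "x = x0 - \<beta>"
  define y where "y = \<beta> - x1"
  have x: "x > 0" using \<open>\<not> x0 \<le> \<beta>\<close> x_def by simp
  have y: "y \<ge> 0" using x1 y_def by simp
  have L: "Bn * x + (Bn - Bp) * y \<le> Bn * (x0 - x1) + S"
    using S unfolding x_def y_def by (simp add: algebra_simps)
  have e2: "e^2 \<ge> 0" by simp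
  have t1: "e^2 * ((1-s)*Ln) \<le> 0" using Ln s e2 by (simp add: mult_nonneg_nonpos)
  have t2: "e^2 * (s*Ln1) \<le> e^2 * (s*(4*y/h^2))"
    using Ln1 s e2 unfolding y_def by (intro mult_left_mono) auto
  have t3: "V*Ff + \<kappa>*V*hv \<le> V*(\<kappa>*\<beta>)"
  proof -
    have "V*(Ff + \<kappa>*hv) \<le> V*(\<kappa>*\<beta>)" using Ff V by (intro mult_left_mono) auto
    then show ?thesis by (simp add: algebra_simps)
  qed
  have t4: "\<kappa>*V*((1-s)*x) \<ge> 0" using k V s x by simp
  have t5: "\<kappa>*V*(s*y) \<le> \<kappa>*K2*(s*y)"
    using k V s y by (intro mult_right_mono mult_left_mono) auto
  have R: "m * (e^2 * ((1-s)*Ln + s*Ln1) + V*Ff - \<kappa>*V*(((1-s)*x0 + s*x1) - hv))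
      \<le> m * (s*(4*e^2/h^2 + \<kappa>*K2)*y)"
  proof -
    have "e^2 * ((1-s)*Ln + s*Ln1) + V*Ff - \<kappa>*V*(((1-s)*x0 + s*x1) - hv)
        = e^2 * ((1-s)*Ln) + e^2*(s*Ln1) + (V*Ff + \<kappa>*V*hv) - V*(\<kappa>*\<beta>) - \<kappa>*V*((1-s)*x) + \<kappa>*V*(s*y)"
      unfolding x_def y_def by (simp add: algebra_simps)
    also have "\<dots> \<le> e^2 * (s*(4*y/h^2)) + \<kappa>*K2*(s*y)" using t1 t2 t3 t4 t5 by linarith
    also have "\<dots> = s*(4*e^2/h^2 + \<kappa>*K2)*y" by (simp add: algebra_simps)
    finally show ?thesis using m by (intro mult_left_mono) auto
  qed
  have "(Bn - Bp) * y \<ge> m * s * (4*e^2/h^2 + \<kappa>*K2) * y" using gap y by (intro mult_right_mono) auto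
  then have "Bn * x \<le> 0" using L eq R by (simp add: algebra_simps)
  then show False using Bn x by (simp add: mult_le_0_iff)
qed

lemma per_nat:
  assumes "v \<in> gridspace M"
  shows "v (i + int M * int c) j = v i j \<and> v i (j + int M * int c) = v i j"
proof (induction c arbitrary: i j)
  case 0 then show ?case by simp
next
  case (Suc c)
  have g: "\<And>i j. v (i + int M) j = v i j \<and> v i (j + int M) = v i j" using assms unfolding gridspace_def by blast
  have "v (i + int M * int (Suc c)) j = v ((i + int M * int c) + int M) j" by (simp add: algebra_simps)
  also have "\<dots> = v i j" using g Suc.IH by simp
  moreover have "v i (j + int M * int (Suc c)) = v i ((j + int M * int c) + int M)" by (simp add: algebra_simps)
  moreover have "\<dots> = v i j" using g Suc.IH by simp
  ultimately show ?case by simp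
qed

lemma per_int:
  assumes "v \<in> gridspace M"
  shows "v (i + int M * c) j = v i j \<and> v i (j + int M * c) = v i j"
proof (cases "c \<ge> 0")
  case True
  then obtain k where "c = int k" using nonneg_int_cases by blast
  then show ?thesis using per_nat[OF assms] by simp
next
  case False
  define k where "k = nat (-c)"
  have k: "-c = int k" unfolding k_def using False by simp
  have mk: "int M * int k = int M * (-c)" using k by simp
  have e1: "(i + int M * c) + int M * int k = i" using mk by simp
  have e2: "(j + int M * c) + int M * int k = j" using mk by simp
  have "v i j = v ((i + int M * c) + int M * int k) j" by (simp only: e1)
  also have "\<dots> = v (i + int M * c) j" using per_nat[OF assms] by blast
  moreover have "v i j = v i ((j + int M * c) + int M * int k)" by (simp only: e2)
  moreover have "\<dots> = v i (j + int M * c)" using per_nat[OF assms] by blast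
  ultimately show ?thesis by simp
qed

definition red :: "nat \<Rightarrow> int \<Rightarrow> int" where "red M i = (i - 1) mod int M + 1"

lemma red_range: "M \<ge> 1 \<Longrightarrow> red M i \<in> {1..int M}"
proof -
  assume "M \<ge> 1"
  then have M: "0 < int M" by simp
  have "(i - 1) mod int M < int M" "0 \<le> (i - 1) mod int M" using M by auto
  then show ?thesis unfolding red_def by auto
qed

lemma red_eq:
  assumes "v \<in> gridspace M"
  shows "v i j = v (red M i) (red M j)"
proof -
  have ei: "i = red M i + int M * ((i - 1) div int M)" unfolding red_def by (simp add: algebra_simps)
  have ej: "j = red M j + int M * ((j - 1) div int M)" unfolding red_def by (simp add: algebra_simps)
  have "v i j = v (red M i) j" by (subst ei) (rule per_int[OF assms, THEN conjunct1])
  also have "\<dots> = v (red M i) (red M j)" by (subst ej) (rule per_int[OF assms, THEN conjunct2])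
  finally show ?thesis .
qed

lemma gsup_le_iff:
  assumes "M \<ge> 1"
  shows "gsup M v \<le> b \<longleftrightarrow> (\<forall>i\<in>{1..int M}. \<forall>j\<in>{1..int M}. \<bar>v i j\<bar> \<le> b)"
proof -
  have ne: "{1..int M} \<times> {1..int M} \<noteq> {}" using assms by auto
  show ?thesis unfolding gsup_def using ne by (auto simp: Max_le_iff)
qed

lemma gsup_global:
  assumes "v \<in> gridspace M" "M \<ge> 1" "gsup M v \<le> b"
  shows "\<bar>v i j\<bar> \<le> b"
proof -
  have "\<bar>v (red M i) (red M j)\<bar> \<le> b"
    using assms(3) red_range[OF assms(2)] unfolding gsup_le_iff[OF assms(2)] by blast
  then show ?thesis using red_eq[OF assms(1)] by simp
qed

lemma argmax:
  assumes "v \<in> gridspace M" "M \<ge> 1"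
  shows "\<exists>i0 j0. \<forall>i j. v i j \<le> v i0 j0"
proof -
  define S where "S = {1..int M} \<times> {1..int M}"
  have fin: "finite ((\<lambda>(i,j). v i j) ` S)" unfolding S_def by simp
  have ne: "(\<lambda>(i,j). v i j) ` S \<noteq> {}" unfolding S_def using assms(2) by auto
  obtain p where p: "p \<in> S" "(\<lambda>(i,j). v i j) p = Max ((\<lambda>(i,j). v i j) ` S)"
    using Max_in[OF fin ne] by auto
  obtain i0 j0 where pij: "p = (i0, j0)" by (cases p)
  have "v i j \<le> v i0 j0" for i j
  proof -
    have "(red M i, red M j) \<in> S" unfolding S_def using red_range[OF assms(2)] by auto
    then have "v (red M i) (red M j) \<le> Max ((\<lambda>(i,j). v i j) ` S)" using fin by (auto intro!: Max_ge)
    then show ?thesis using red_eq[OF assms(1)] p pij by simp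
  qed
  then show ?thesis by blast
qed

lemma grid_neg: "v \<in> gridspace M \<Longrightarrow> (\<lambda>i j. - v i j) \<in> gridspace M"
  unfolding gridspace_def by simp

lemma argmin:
  assumes "v \<in> gridspace M" "M \<ge> 1"
  shows "\<exists>i0 j0. \<forall>i j. v i0 j0 \<le> v i j"
  using argmax[OF grid_neg[OF assms(1)] assms(2)] by auto

lemma glap_comb: "glap h (\<lambda>a b. (1-s) * u a b + s * w a b) i j = (1-s) * glap h u i j + s * glap h w i j"
  unfolding glap_def by (simp add: algebra_simps add_divide_distrib diff_divide_distrib)

lemma glap_max: "h > 0 \<Longrightarrow> \<forall>i j. u i j \<le> u i0 j0 \<Longrightarrow> glap h u i0 j0 \<le> 0"
proof -
  assume h: "h > 0" and mx: "\<forall>i j. u i j \<le> u i0 j0"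
  have "u (i0+1) j0 \<le> u i0 j0" "u (i0-1) j0 \<le> u i0 j0" "u i0 (j0+1) \<le> u i0 j0" "u i0 (j0-1) \<le> u i0 j0"
    using mx by auto
  then have "u (i0+1) j0 + u (i0-1) j0 + u i0 (j0+1) + u i0 (j0-1) - 4 * u i0 j0 \<le> 0" by linarith
  then show ?thesis unfolding glap_def using h by (simp add: divide_nonpos_pos)
qed

lemma glap_bound: "h > 0 \<Longrightarrow> \<forall>i j. u i j \<le> b \<Longrightarrow> glap h u i0 j0 \<le> 4 * (b - u i0 j0) / h^2"
proof -
  assume h: "h > 0" and mx: "\<forall>i j. u i j \<le> b"
  have "u (i0+1) j0 \<le> b" "u (i0-1) j0 \<le> b" "u i0 (j0+1) \<le> b" "u i0 (j0-1) \<le> b"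
    using mx by auto
  then have "u (i0+1) j0 + u (i0-1) j0 + u i0 (j0+1) + u i0 (j0-1) - 4 * u i0 j0 \<le> 4 * (b - u i0 j0)" by (simp add: algebra_simps)
  then show ?thesis unfolding glap_def using h by (simp add: divide_right_mono)
qed

lemma step_bound:
  fixes u :: "nat \<Rightarrow> grid" and Bc :: "nat \<Rightarrow> real" and FF hv :: grid
  assumes eqn: "\<forall>i j. (\<Sum>k=1..n. Bc k * (u k i j - u (k-1) i j)) =
        m * (e^2 * glap h (\<lambda>a b. (1-s) * u n a b + s * u (n-1) a b) i j + Vn * FF i j
             - \<kappa> * Vn * (((1-s) * u n i j + s * u (n-1) i j) - hv i j))"
    and FF: "\<forall>i j. FF i j + \<kappa> * hv i j \<le> \<kappa> * \<beta>"
    and IH: "\<forall>k<n. \<forall>i j. u k i j \<le> \<beta>"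
    and grid: "u n \<in> gridspace M" and M: "M \<ge> 1"
    and n: "1 \<le> n"
    and Bpos: "Bc n > 0"
    and gap1: "n = 1 \<Longrightarrow> Bc 1 \<ge> m * s * (4*e^2/h^2 + \<kappa>*K2)"
    and gap2: "n \<ge> 2 \<Longrightarrow> Bc n - Bc (n-1) \<ge> m * s * (4*e^2/h^2 + \<kappa>*K2)"
    and B1: "n \<ge> 2 \<Longrightarrow> 0 \<le> Bc 1"
    and mono: "\<And>k. 1 \<le> k \<Longrightarrow> k + 2 \<le> n \<Longrightarrow> Bc k \<le> Bc (k+1)"
    and V: "0 \<le> Vn" "Vn \<le> K2" and k: "\<kappa> \<ge> 0" and m: "m > 0" and s: "0 < s" "s < 1" and h: "h > 0"
  shows "\<forall>i j. u n i j \<le> \<beta>"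
proof -
  obtain i0 j0 where mx: "\<forall>i j. u n i j \<le> u n i0 j0" using argmax[OF grid M] by blast
  define Bp where "Bp = (if n = 1 then 0 else Bc (n-1))"
  define S where "S = (\<Sum>k=1..n-1. Bc k * (u k i0 j0 - u (k-1) i0 j0))"
  have sumsplit: "(\<Sum>k=1..n. Bc k * (u k i0 j0 - u (k-1) i0 j0)) = Bc n * (u n i0 j0 - u (n-1) i0 j0) + S"
  proof -
    obtain n' where n': "n = Suc n'" using n by (cases n) auto
    show ?thesis unfolding S_def n' by simp
  qed
  have S: "S \<ge> Bp * (u (n-1) i0 j0 - \<beta>)"
  proof (cases "n = 1")
    case True then show ?thesis unfolding S_def Bp_def by simp
  next
    case False
    then have n2: "n \<ge> 2" using n by simp
    have "Bc (n-1) * (u (n-1) i0 j0 - \<beta>) \<le> S \<and> 0 \<le> Bc (n-1)"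
      unfolding S_def
      by (rule sumlow[where Bc=Bc and v="\<lambda>k. u k i0 j0"]) (use n2 B1 mono IH in auto)
    then show ?thesis unfolding Bp_def using False by simp
  qed
  have gap: "Bc n - Bp \<ge> m * s * (4*e^2/h^2 + \<kappa>*K2)"
    using gap1 gap2 n unfolding Bp_def by (cases "n = 1") auto
  have x1: "u (n-1) i0 j0 \<le> \<beta>" using IH n by simp
  have Ln: "glap h (u n) i0 j0 \<le> 0" by (rule glap_max[OF h mx])
  have Ln1: "glap h (u (n-1)) i0 j0 \<le> 4 * (\<beta> - u (n-1) i0 j0) / h^2"
    by (rule glap_bound[OF h]) (use IH n in simp)
  have eq: "Bc n * (u n i0 j0 - u (n-1) i0 j0) + S =
      m * (e^2 * ((1-s) * glap h (u n) i0 j0 + s * glap h (u (n-1)) i0 j0) + Vn * FF i0 j0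
             - \<kappa> * Vn * (((1-s) * u n i0 j0 + s * u (n-1) i0 j0) - hv i0 j0))"
    using eqn[rule_format, of i0 j0] unfolding sumsplit glap_comb[of h s "u n" "u (n-1)" i0 j0] .
  have "u n i0 j0 \<le> \<beta>"
    by (rule ptwise[OF eq S x1 Ln Ln1 V _ k m s Bpos gap]) (use FF in simp)
  then show ?thesis using mx order_trans by blast
qed

theorem mainTheorem10:
  fixes L m \<epsilon> \<alpha> \<kappa> \<beta> K1 K2 T R0 :: real
    and M N :: nat
    and F f V :: "real \<Rightarrow> real"
    and t :: "nat \<Rightarrow> real"
    and \<phi> \<phi>hat :: "nat \<Rightarrow> grid"
    and R :: "nat \<Rightarrow> real"
  assumes L: "L > 0" and m: "m > 0" and eps: "\<epsilon> > 0"
    and alpha: "0 < \<alpha>" "\<alpha> < 1"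
    and M: "M \<ge> 1"
    and nonlin:
      "(F = dwF \<and> f = dwf \<and> \<beta> = 1) \<or>
       (\<exists>\<theta> \<theta>c. 0 < \<theta> \<and> \<theta> < \<theta>c \<and> F = fhF \<theta> \<theta>c \<and> f = fhf \<theta> \<theta>c
          \<and> 0 < \<beta> \<and> \<beta> < 1 \<and> f \<beta> = 0)"
    (* (A1) *)
    and V_diff: "\<forall>x. V differentiable (at x)"
    and V_C1: "continuous_on UNIV (deriv V)"
    and V_W2inf: "\<exists>Lip. \<forall>x y. \<bar>deriv V x - deriv V y\<bar> \<le> Lip * \<bar>x - y\<bar>"
    and V1: "V 1 = 1" and dV1: "deriv V 1 = 0"
    and dVbound: "\<forall>x. \<bar>deriv V x\<bar> \<le> K1"
    (* (A2) *)
    and K2: "K2 > 0" and Vbound: "\<forall>x. 0 \<le> V x \<and> V x \<le> K2"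
    (* (A3) *)
    and Vmono: "\<forall>z1 z2. \<bar>z1 - 1\<bar> \<le> \<bar>z2 - 1\<bar> \<longrightarrow> \<bar>V z1 - 1\<bar> \<le> \<bar>V z2 - 1\<bar>"
    (* time grid *)
    and t0: "t 0 = 0" and tN: "t N = T"
    and tmono: "\<forall>k\<in>{1..N}. t (k-1) < t k"
    and kappa0: "\<kappa> \<ge> 0"
    (* hypotheses of the theorem *)
    and ratio: "\<forall>k\<in>{2..N}. rr t k \<ge> 4/7"
    and kappa: "\<forall>x\<in>{-\<beta>..\<beta>}. \<bar>deriv f x\<bar> \<le> \<kappa>"
    and phi0: "gsup M (\<phi> 0) \<le> \<beta>"
    and tau1: "N \<ge> 1 \<longrightarrow> tau t 1 \<le> min
        ((4 / (11 * (\<alpha>/2) * m * (\<kappa> + 4 * \<epsilon>^2 / (L / real M)^2) * Gamma (2 - \<alpha>))) powr (1/\<alpha>))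
        ((4 / (11 * \<kappa> * (1 - \<alpha>/2) * m * Gamma (2 - \<alpha>))) powr (1/\<alpha>))"
    and taun: "\<forall>n\<in>{1..N}. tau t n \<le>
        (4 / (11 * (1 - \<alpha>/2) * m * (4 * \<epsilon>^2 / (L / real M)^2 + \<kappa> * K2) * Gamma (2 - \<alpha>))) powr (1/\<alpha>)"
    (* the balanced L2-1_sigma-sESAV scheme *)
    and R_0: "R 0 = R0"
    and grid_phi: "\<forall>n\<le>N. \<phi> n \<in> gridspace M"
    and grid_phihat: "\<forall>n\<in>{1..N}. \<phi>hat n \<in> gridspace M"
    and step1: "N \<ge> 1 \<longrightarrow> gsup M (\<phi>hat 1) \<le> \<beta> \<and>
        (\<forall>i j. Bcoef t \<alpha> 1 1 * (\<phi>hat 1 i j - \<phi> 0 i j) =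
           m * (\<epsilon>^2 * glap (L / real M) (\<lambda>a b. (1 - \<alpha>/2) * \<phi>hat 1 a b + (\<alpha>/2) * \<phi> 0 a b) i j
                + f ((1 - \<alpha>/2) * \<phi>hat 1 i j + (\<alpha>/2) * \<phi> 0 i j)))"
    and predict: "\<forall>n\<in>{2..N}. \<forall>i j.
        \<phi>hat n i j = clip \<beta> ((1 + rr t n) * \<phi> (n-1) i j - rr t n * \<phi> (n-2) i j)"
    and scheme_phi: "\<forall>n\<in>{1..N}.
        (let hs = (\<lambda>a b. (1 - \<alpha>/2) * \<phi>hat n a b + (\<alpha>/2) * \<phi> (n-1) a b);
             ps = (\<lambda>a b. (1 - \<alpha>/2) * \<phi> n a b + (\<alpha>/2) * \<phi> (n-1) a b);
             Vn = V (gh F (L / real M) M hs (R (n-1)))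
         in \<forall>i j. Dcaputo t \<alpha> \<phi> n i j =
              m * (\<epsilon>^2 * glap (L / real M) ps i j + Vn * f (hs i j)
                   - \<kappa> * Vn * (ps i j - hs i j)))"
    and scheme_R: "\<forall>n\<in>{1..N}.
        (let hs = (\<lambda>a b. (1 - \<alpha>/2) * \<phi>hat n a b + (\<alpha>/2) * \<phi> (n-1) a b);
             ps = (\<lambda>a b. (1 - \<alpha>/2) * \<phi> n a b + (\<alpha>/2) * \<phi> (n-1) a b);
             Vn = V (gh F (L / real M) M hs (R (n-1)))
         in (R n - R (n-1)) / tau t n =
              Vn * gip (L / real M) M (\<lambda>a b. - f (hs a b) + \<kappa> * (ps a b - hs a b))
                     (\<lambda>a b. (\<phi> n a b - \<phi> (n-1) a b) / tau t n))"
  shows "\<forall>n\<in>{1..N}. gsup M (\<phi> n) \<le> \<beta>"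
proof -
  define h where "h = L / real M"
  define C where "C = 4 * \<epsilon>^2 / h^2 + \<kappa> * K2"
  have h: "h > 0" unfolding h_def using L M by simp
  have C: "C > 0" unfolding C_def using h eps kappa0 K2 by (simp add: add_pos_nonneg)
  have s: "0 < \<alpha>/2" "\<alpha>/2 < 1" using alpha by auto
  note np = nonlin_props[OF nonlin]
  have fb: "f z + \<kappa> * z \<le> \<kappa> * \<beta>" "- (\<kappa> * \<beta>) \<le> f z + \<kappa> * z" if "-\<beta> \<le> z" "z \<le> \<beta>" for z
    using fbound[OF np(1-4) kappa that] by auto
  have tm: "\<forall>k\<in>{1..N}. t (k-1) < t k" using tmono .
  have Bfacts: "Bcoef t \<alpha> n n > 0 \<and> (n = 1 \<longrightarrow> Bcoef t \<alpha> 1 1 \<ge> m * (\<alpha>/2) * C)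
      \<and> (n \<ge> 2 \<longrightarrow> Bcoef t \<alpha> n n - Bcoef t \<alpha> n (n-1) \<ge> m * (\<alpha>/2) * C)" if n: "1 \<le> n" "n \<le> N" for n
  proof -
    define Y where "Y = ((1 - \<alpha>/2) * tau t n) powr (-\<alpha>) / Gamma (2 - \<alpha>)"
    have tp: "tau t n > 0" using tau_pos[OF tm] n by simp
    have tb: "tau t n \<le> (4 / (11 * (1 - \<alpha>/2) * m * C * Gamma (2 - \<alpha>))) powr (1/\<alpha>)"
      using taun n unfolding C_def h_def by simp
    have mY: "m * C \<le> Y" unfolding Y_def by (rule Xbound[OF alpha tp m C tb])
    have mC: "m * C > 0" using m C by simp
    have smY: "m * (\<alpha>/2) * C \<le> (\<alpha>/2) * Y" using mY alpha by (simp add: algebra_simps)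
    have Ypos: "Y > 0" using mY mC by simp
    note asp = an_split[OF alpha tm n, folded Y_def]
    show ?thesis
    proof (cases "n = 1")
      case True
      have "Bcoef t \<alpha> 1 1 = (1 - \<alpha>/2) * Y" unfolding Bcoef_def using asp True by simp
      moreover have "(\<alpha>/2) * Y \<le> (1 - \<alpha>/2) * Y" using Ypos alpha by (intro mult_right_mono) auto
      moreover have "(1 - \<alpha>/2) * Y > 0" using Ypos alpha by simp
      ultimately show ?thesis using True smY by simp
    next
      case False
      then have n2: "n \<ge> 2" using n by simp
      have g: "Bcoef t \<alpha> n n - Bcoef t \<alpha> n (n-1) \<ge> (\<alpha>/2) * Y"
        using M3[OF alpha tm ratio n2 n(2)] asp by (simp add: algebra_simps)
      have nn: "\<forall>k. 1 \<le> k \<longrightarrow> k \<le> n - 1 \<longrightarrow> 0 \<le> Bcoef t \<alpha> n k"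
      proof
        fix k show "1 \<le> k \<longrightarrow> k \<le> n - 1 \<longrightarrow> 0 \<le> Bcoef t \<alpha> n k"
        proof (induction k)
          case 0 then show ?case by simp
        next
          case (Suc k)
          show ?case
          proof (cases "k = 0")
            case True then show ?thesis using M1[OF alpha tm n2 n(2)] by simp
          next
            case False
            show ?thesis
            proof (intro impI)
              assume k: "1 \<le> Suc k" "Suc k \<le> n - 1"
              then have k2: "k + 2 \<le> n" "1 \<le> k" "k \<le> n - 1" using False by auto
              have "0 \<le> Bcoef t \<alpha> n k" using Suc.IH k2 by simp
              moreover have "Bcoef t \<alpha> n k \<le> Bcoef t \<alpha> n (k+1)" by (rule M2[OF alpha tm ratio k2(2) k2(1) n(2)])
              ultimately show "0 \<le> Bcoef t \<alpha> n (Suc k)" by simp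
            qed
          qed
        qed
      qed
      then have "0 \<le> Bcoef t \<alpha> n (n-1)" using n2 by simp
      moreover have "(\<alpha>/2) * Y > 0" using Ypos alpha by simp
      ultimately show ?thesis using g smY n2 by linarith
    qed
  qed
  have main: "\<forall>i j. \<bar>\<phi> n i j\<bar> \<le> \<beta>" if "n \<le> N" for n
    using that
  proof (induction n rule: less_induct)
    case (less n)
    show ?case
    proof (cases "n = 0")
      case True
      then show ?thesis using gsup_global[OF _ M phi0] grid_phi by simp
    next
      case False
      then have n: "1 \<le> n" "n \<le> N" using less.prems by auto
      have IH: "\<forall>k<n. \<forall>i j. \<bar>\<phi> k i j\<bar> \<le> \<beta>" using less.IH n by simp
      have hat: "\<bar>\<phi>hat n i j\<bar> \<le> \<beta>" for i j
      proof (cases "n = 1")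
        case True
        have g1: "gsup M (\<phi>hat 1) \<le> \<beta>" using step1 n True by simp
        have g2: "\<phi>hat 1 \<in> gridspace M" using grid_phihat n True by simp
        show ?thesis using gsup_global[OF g2 M g1] True by simp
      next
        case False
        then have "\<phi>hat n i j = clip \<beta> ((1 + rr t n) * \<phi> (n-1) i j - rr t n * \<phi> (n-2) i j)"
          using predict n by simp
        then show ?thesis unfolding clip_def using np(1) by (simp add: abs_le_iff min_def max_def)
      qed
      define hs where "hs = (\<lambda>a b. (1 - \<alpha>/2) * \<phi>hat n a b + (\<alpha>/2) * \<phi> (n-1) a b)"
      have hsb: "-\<beta> \<le> hs i j \<and> hs i j \<le> \<beta>" for i j
      proof -
        have a1: "\<bar>\<phi>hat n i j\<bar> \<le> \<beta>" by (rule hat)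
        have a2: "\<bar>\<phi> (n-1) i j\<bar> \<le> \<beta>" using IH n by simp
        have "(1 - \<alpha>/2) * \<phi>hat n i j \<le> (1 - \<alpha>/2) * \<beta>" using a1 alpha by (intro mult_left_mono) auto
        moreover have "(\<alpha>/2) * \<phi> (n-1) i j \<le> (\<alpha>/2) * \<beta>" using a2 alpha by (intro mult_left_mono) auto
        moreover have "(1 - \<alpha>/2) * (-\<beta>) \<le> (1 - \<alpha>/2) * \<phi>hat n i j" using a1 alpha by (intro mult_left_mono) auto
        moreover have "(\<alpha>/2) * (-\<beta>) \<le> (\<alpha>/2) * \<phi> (n-1) i j" using a2 alpha by (intro mult_left_mono) auto
        ultimately show ?thesis unfolding hs_def by (simp add: algebra_simps)
      qed
      define Vn where "Vn = V (gh F h M hs (R (n-1)))"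
      have V: "0 \<le> Vn" "Vn \<le> K2" unfolding Vn_def using Vbound by auto
      have eqn: "\<forall>i j. (\<Sum>k=1..n. Bcoef t \<alpha> n k * (\<phi> k i j - \<phi> (k-1) i j)) =
          m * (\<epsilon>^2 * glap h (\<lambda>a b. (1-\<alpha>/2) * \<phi> n a b + (\<alpha>/2) * \<phi> (n-1) a b) i j + Vn * f (hs i j)
               - \<kappa> * Vn * (((1-\<alpha>/2) * \<phi> n i j + (\<alpha>/2) * \<phi> (n-1) i j) - hs i j))"
      proof -
        have nin: "n \<in> {1..N}" using n by simp
        note sp = bspec[OF scheme_phi nin]
        show ?thesis using sp unfolding Let_def Dcaputo_def hs_def Vn_def h_def by simp
      qed
      note BF = Bfacts[OF n]
      have Bpos: "Bcoef t \<alpha> n n > 0" using BF by simp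
      have gap1: "n = 1 \<Longrightarrow> Bcoef t \<alpha> n 1 \<ge> m * (\<alpha>/2) * (4*\<epsilon>^2/h^2 + \<kappa>*K2)"
        using BF unfolding C_def by simp
      have gap2: "n \<ge> 2 \<Longrightarrow> Bcoef t \<alpha> n n - Bcoef t \<alpha> n (n-1) \<ge> m * (\<alpha>/2) * (4*\<epsilon>^2/h^2 + \<kappa>*K2)"
        using BF unfolding C_def by simp
      have B1: "n \<ge> 2 \<Longrightarrow> 0 \<le> Bcoef t \<alpha> n 1" using M1[OF alpha tm _ n(2)] by simp
      have mono: "\<And>k. 1 \<le> k \<Longrightarrow> k + 2 \<le> n \<Longrightarrow> Bcoef t \<alpha> n k \<le> Bcoef t \<alpha> n (k+1)"
        using M2[OF alpha tm ratio _ _ n(2)] by simp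
      have FF: "\<forall>i j. f (hs i j) + \<kappa> * hs i j \<le> \<kappa> * \<beta>" using fb(1) hsb by blast
      have IHu: "\<forall>k<n. \<forall>i j. \<phi> k i j \<le> \<beta>" using IH by (simp add: abs_le_iff)
      have gr: "\<phi> n \<in> gridspace M" using grid_phi n by simp
      have up: "\<forall>i j. \<phi> n i j \<le> \<beta>"
        by (rule step_bound[OF eqn FF IHu gr M n(1) Bpos gap1 gap2 B1 mono V kappa0 m s h])
      define u' where "u' = (\<lambda>k i j. - \<phi> k i j)"
      define FF' where "FF' = (\<lambda>i j. - f (hs i j))"
      define hv' where "hv' = (\<lambda>i j. - hs i j)"
      have glap_neg: "glap h (\<lambda>a b. - w a b) i j = - glap h w i j" for w :: grid and i j
        unfolding glap_def by (simp add: algebra_simps add_divide_distrib diff_divide_distrib)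
      have eqn': "\<forall>i j. (\<Sum>k=1..n. Bcoef t \<alpha> n k * (u' k i j - u' (k-1) i j)) =
          m * (\<epsilon>^2 * glap h (\<lambda>a b. (1-\<alpha>/2) * u' n a b + (\<alpha>/2) * u' (n-1) a b) i j + Vn * FF' i j
               - \<kappa> * Vn * (((1-\<alpha>/2) * u' n i j + (\<alpha>/2) * u' (n-1) i j) - hv' i j))"
      proof (intro allI)
        fix i j
        have "(\<Sum>k=1..n. Bcoef t \<alpha> n k * (u' k i j - u' (k-1) i j)) = - (\<Sum>k=1..n. Bcoef t \<alpha> n k * (\<phi> k i j - \<phi> (k-1) i j))"
          unfolding u'_def by (simp add: sum_negf[symmetric] algebra_simps)
        also have "\<dots> = - (m * (\<epsilon>^2 * glap h (\<lambda>a b. (1-\<alpha>/2) * \<phi> n a b + (\<alpha>/2) * \<phi> (n-1) a b) i j + Vn * f (hs i j)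
               - \<kappa> * Vn * (((1-\<alpha>/2) * \<phi> n i j + (\<alpha>/2) * \<phi> (n-1) i j) - hs i j)))"
          using eqn by simp
        also have "\<dots> = m * (\<epsilon>^2 * glap h (\<lambda>a b. (1-\<alpha>/2) * u' n a b + (\<alpha>/2) * u' (n-1) a b) i j + Vn * FF' i j
               - \<kappa> * Vn * (((1-\<alpha>/2) * u' n i j + (\<alpha>/2) * u' (n-1) i j) - hv' i j))"
          unfolding u'_def FF'_def hv'_def glap_comb glap_neg by (simp add: algebra_simps)
        finally show "(\<Sum>k=1..n. Bcoef t \<alpha> n k * (u' k i j - u' (k-1) i j)) =
          m * (\<epsilon>^2 * glap h (\<lambda>a b. (1-\<alpha>/2) * u' n a b + (\<alpha>/2) * u' (n-1) a b) i j + Vn * FF' i j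
               - \<kappa> * Vn * (((1-\<alpha>/2) * u' n i j + (\<alpha>/2) * u' (n-1) i j) - hv' i j))" .
      qed
      have FF': "\<forall>i j. FF' i j + \<kappa> * hv' i j \<le> \<kappa> * \<beta>"
    proof (intro allI)
      fix i j
      have "- (\<kappa> * \<beta>) \<le> f (hs i j) + \<kappa> * hs i j" using fb(2) hsb by blast
      then show "FF' i j + \<kappa> * hv' i j \<le> \<kappa> * \<beta>" unfolding FF'_def hv'_def by simp
    qed
      have IHu': "\<forall>k<n. \<forall>i j. u' k i j \<le> \<beta>" unfolding u'_def using IH by (simp add: abs_le_iff)
      have gr': "u' n \<in> gridspace M" unfolding u'_def using grid_neg[OF gr] by simp
      have lo: "\<forall>i j. u' n i j \<le> \<beta>"
        by (rule step_bound[OF eqn' FF' IHu' gr' M n(1) Bpos gap1 gap2 B1 mono V kappa0 m s h])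
      then have lo: "\<forall>i j. - \<phi> n i j \<le> \<beta>" unfolding u'_def by simp
      show ?thesis using up lo by (simp add: abs_le_iff)
    qed
  qed
  show ?thesis
  proof
    fix n assume n: "n \<in> {1..N}"
    have "\<forall>i\<in>{1..int M}. \<forall>j\<in>{1..int M}. \<bar>\<phi> n i j\<bar> \<le> \<beta>" using main n by simp
    then show "gsup M (\<phi> n) \<le> \<beta>" using gsup_le_iff[OF M] by blast
  qed
qed

end
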